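(* Let $R$ be an integral domain and $\star$ a star operation on $R$. Every $\star$-invertible nonzero ideal $I$ of $R$ (i.e. $(II^{-1})^{\star}=R$) is $\star$-basic, and every nonzero ideal $I$ with $(I^2)^{\star}=I^{\star}$ is $\star$-basic.
   Context: Let $R$ be a domain with quotient field $K$ and $\mathcal F(R)$ its set of nonzero fractional ideals. A star operation is a map $I\mapsto I^\star$ on $\mathcal F(R)$ such that for all nonzero $a\in K$ and $I,J\in\mathcal F(R)$: $(aI)^\star=aI^\star$, $R^\star=R$; $I\subseteq I^\star$, and $I\subseteq J$ implies $I^\star\subseteq J^\star$; $I^{\star\star}=I^\star$. Here $I^{-1}=(R:I)=\{x\in K: xI\subseteq R\}$. For a nonzero ideal $I$, an ideal $J\subseteq I$ is a $\star$-reduction of $I$ if $(JI^n)^\star=(I^{n+1})^\star$ for some integer $n\ge 0$; it is a trivial $\star$-reduction if $J^\star=I^\star$. $I$ is $\star$-basic if every $\star$-reduction of $I$ is trivial. *)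

theory Defs
  imports "HOL-Computational_Algebra.Fraction_Field"
begin

text \<open>The domain R is modelled by a type 'a of class idom; its quotient field K is
  'a fract, and R is identified with its image in K.\<close>

definition ringR :: "'a::idom fract set" where
  "ringR = {Fract a 1 | a. True}"

definition R_submodule :: "'a::idom fract set \<Rightarrow> bool" where
  "R_submodule M \<longleftrightarrow> 0 \<in> M \<and> (\<forall>x\<in>M. \<forall>y\<in>M. x + y \<in> M)
     \<and> (\<forall>r\<in>ringR. \<forall>x\<in>M. r * x \<in> M)"

definition frac_ideal :: "'a::idom fract set \<Rightarrow> bool" where
  "frac_ideal I \<longleftrightarrow> R_submodule I \<and> I \<noteq> {0}
     \<and> (\<exists>d\<in>ringR. d \<noteq> 0 \<and> (\<forall>x\<in>I. d * x \<in> ringR))"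

definition nz_ideal :: "'a::idom fract set \<Rightarrow> bool" where
  "nz_ideal I \<longleftrightarrow> R_submodule I \<and> I \<subseteq> ringR \<and> I \<noteq> {0}"

definition ideal_mult :: "'a::idom fract set \<Rightarrow> 'a fract set \<Rightarrow> 'a fract set" where
  "ideal_mult I J = \<Inter>{M. R_submodule M \<and> {a * b | a b. a \<in> I \<and> b \<in> J} \<subseteq> M}"

fun ideal_pow :: "'a::idom fract set \<Rightarrow> nat \<Rightarrow> 'a fract set" where
  "ideal_pow I 0 = ringR"
| "ideal_pow I (Suc n) = ideal_mult I (ideal_pow I n)"

text \<open>I^{-1} = (R : I).\<close>
definition frac_inv :: "'a::idom fract set \<Rightarrow> 'a fract set" where
  "frac_inv I = {x. \<forall>y\<in>I. x * y \<in> ringR}"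

definition scale :: "'a::idom fract \<Rightarrow> 'a fract set \<Rightarrow> 'a fract set" where
  "scale a I = (\<lambda>x. a * x) ` I"

definition star_operation :: "('a::idom fract set \<Rightarrow> 'a fract set) \<Rightarrow> bool" where
  "star_operation st \<longleftrightarrow>
     (\<forall>I. frac_ideal I \<longrightarrow> frac_ideal (st I))
   \<and> (\<forall>a I. a \<noteq> 0 \<and> frac_ideal I \<longrightarrow> st (scale a I) = scale a (st I))
   \<and> st ringR = ringR
   \<and> (\<forall>I. frac_ideal I \<longrightarrow> I \<subseteq> st I)
   \<and> (\<forall>I J. frac_ideal I \<and> frac_ideal J \<and> I \<subseteq> J \<longrightarrow> st I \<subseteq> st J)
   \<and> (\<forall>I. frac_ideal I \<longrightarrow> st (st I) = st I)"

definition star_reduction ::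
  "('a::idom fract set \<Rightarrow> 'a fract set) \<Rightarrow> 'a fract set \<Rightarrow> 'a fract set \<Rightarrow> bool" where
  "star_reduction st J I \<longleftrightarrow> nz_ideal J \<and> J \<subseteq> I \<and>
     (\<exists>n. st (ideal_mult J (ideal_pow I n)) = st (ideal_pow I (Suc n)))"

definition star_basic :: "('a::idom fract set \<Rightarrow> 'a fract set) \<Rightarrow> 'a fract set \<Rightarrow> bool" where
  "star_basic st I \<longleftrightarrow> (\<forall>J. star_reduction st J I \<longrightarrow> st J = st I)"

end

theory Submission
  imports Defs
begin

lemma ringR_iff: "x \<in> ringR \<longleftrightarrow> (\<exists>a. x = Fract a 1)"
  unfolding ringR_def by auto

lemma ringR_add: "x \<in> ringR \<Longrightarrow> y \<in> ringR \<Longrightarrow> x + y \<in> ringR"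
  unfolding ringR_iff by auto

lemma ringR_mult: "x \<in> ringR \<Longrightarrow> y \<in> ringR \<Longrightarrow> x * y \<in> ringR"
  unfolding ringR_iff by auto

lemma ringR_0: "0 \<in> ringR"
  unfolding ringR_iff by (metis Zero_fract_def)

lemma ringR_1: "1 \<in> ringR"
  unfolding ringR_iff by (metis One_fract_def)

lemma denom_exists: "\<exists>r\<in>ringR. r \<noteq> (0::'a::idom fract) \<and> r * a \<in> ringR"
proof (cases a)
  case (Fract p q)
  show ?thesis
    apply (rule bexI[of _ "Fract q 1"])
    using Fract by (auto simp: ringR_iff eq_fract mult.commute Zero_fract_def intro: exI[of _ p])
qed

lemma im_sub: "R_submodule (ideal_mult I J)"
  unfolding ideal_mult_def R_submodule_def by auto

lemma im_prod: "a \<in> I \<Longrightarrow> b \<in> J \<Longrightarrow> a * b \<in> ideal_mult I J"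
  unfolding ideal_mult_def by auto

lemma im_least: "R_submodule M \<Longrightarrow> (\<And>a b. a \<in> I \<Longrightarrow> b \<in> J \<Longrightarrow> a * b \<in> M) \<Longrightarrow> ideal_mult I J \<subseteq> M"
  unfolding ideal_mult_def by auto

lemma im_mono: "I \<subseteq> I' \<Longrightarrow> J \<subseteq> J' \<Longrightarrow> ideal_mult I J \<subseteq> ideal_mult I' J'"
  by (rule im_least[OF im_sub]) (auto intro: im_prod)

lemma im_comm_sub: "ideal_mult I J \<subseteq> ideal_mult J I"
  by (rule im_least[OF im_sub]) (metis im_prod mult.commute)

lemma im_comm: "ideal_mult I J = ideal_mult J I"
  using im_comm_sub by blast

lemma sub_colon: "R_submodule M \<Longrightarrow> R_submodule {x. x * c \<in> M}"
  unfolding R_submodule_def by (auto simp: distrib_right mult.assoc)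

lemma im_assoc_sub: "ideal_mult (ideal_mult I J) K \<subseteq> ideal_mult I (ideal_mult J K)"
proof (rule im_least[OF im_sub])
  fix x c assume x: "x \<in> ideal_mult I J" and c: "c \<in> K"
  have "ideal_mult I J \<subseteq> {x. x * c \<in> ideal_mult I (ideal_mult J K)}"
    by (rule im_least[OF sub_colon[OF im_sub]]) (auto simp: mult.assoc intro!: im_prod c)
  with x show "x * c \<in> ideal_mult I (ideal_mult J K)" by auto
qed

lemma im_assoc: "ideal_mult (ideal_mult I J) K = ideal_mult I (ideal_mult J K)"
proof
  show "ideal_mult I (ideal_mult J K) \<subseteq> ideal_mult (ideal_mult I J) K"
  proof -
    have "ideal_mult I (ideal_mult J K) = ideal_mult (ideal_mult K J) I"
      using im_comm by metis
    also have "\<dots> \<subseteq> ideal_mult K (ideal_mult J I)" by (rule im_assoc_sub)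
    also have "\<dots> = ideal_mult (ideal_mult I J) K" using im_comm by metis
    finally show ?thesis .
  qed
qed (rule im_assoc_sub)

lemma im_ringR: "R_submodule I \<Longrightarrow> ideal_mult I ringR = I"
proof
  assume I: "R_submodule I"
  show "ideal_mult I ringR \<subseteq> I"
    by (rule im_least[OF I]) (use I in \<open>auto simp: R_submodule_def\<close>, metis mult.commute)
  show "I \<subseteq> ideal_mult I ringR"
    using im_prod[OF _ ringR_1, of _ I] by auto
qed

lemma frac_ringR: "frac_ideal ringR"
  unfolding frac_ideal_def R_submodule_def
  using ringR_0 ringR_1 ringR_add ringR_mult
  by (metis (no_types, lifting) empty_iff insert_iff mult_1 one_neq_zero)

lemma nz_frac: "nz_ideal I \<Longrightarrow> frac_ideal I"
  unfolding nz_ideal_def frac_ideal_def using ringR_1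
  by (metis mult_1 one_neq_zero subsetD)

lemma frac_sub: "frac_ideal I \<Longrightarrow> R_submodule I"
  unfolding frac_ideal_def by auto

lemma frac_nz: "frac_ideal I \<Longrightarrow> \<exists>a\<in>I. a \<noteq> 0"
  unfolding frac_ideal_def R_submodule_def by auto

lemma frac_mult: assumes A: "frac_ideal A" and B: "frac_ideal B"
  shows "frac_ideal (ideal_mult A B)"
proof -
  obtain a where a: "a \<in> A" "a \<noteq> 0" using frac_nz[OF A] by auto
  obtain b where b: "b \<in> B" "b \<noteq> 0" using frac_nz[OF B] by auto
  obtain dA where dA: "dA \<in> ringR" "dA \<noteq> 0" "\<forall>x\<in>A. dA * x \<in> ringR" using A frac_ideal_def by auto
  obtain dB where dB: "dB \<in> ringR" "dB \<noteq> 0" "\<forall>x\<in>B. dB * x \<in> ringR" using B frac_ideal_def by auto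
  have "R_submodule {x. (dA * dB) * x \<in> ringR}"
    using sub_colon[OF frac_sub[OF frac_ringR], of "dA * dB"] by (simp add: mult.commute)
  hence sub: "ideal_mult A B \<subseteq> {x. (dA * dB) * x \<in> ringR}"
  proof (rule im_least)
    fix x y assume "x \<in> A" "y \<in> B"
    hence "(dA * x) * (dB * y) \<in> ringR" using dA dB ringR_mult by blast
    thus "x * y \<in> {x. (dA * dB) * x \<in> ringR}" by (simp add: algebra_simps)
  qed
  have ab: "a * b \<in> ideal_mult A B" "a * b \<noteq> 0" using a b im_prod by auto
  have "\<forall>x\<in>ideal_mult A B. (dA * dB) * x \<in> ringR" using sub by blast
  moreover have "ideal_mult A B \<noteq> {0}" using ab by blast
  moreover have "dA * dB \<in> ringR" "dA * dB \<noteq> 0" using dA dB ringR_mult by auto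
  ultimately show ?thesis unfolding frac_ideal_def using im_sub by blast
qed

lemma frac_scale: assumes B: "frac_ideal B" and a: "a \<noteq> 0"
  shows "frac_ideal (scale a B)"
proof -
  obtain b where b: "b \<in> B" "b \<noteq> 0" using frac_nz[OF B] by auto
  obtain d where d: "d \<in> ringR" "d \<noteq> 0" "\<forall>x\<in>B. d * x \<in> ringR" using B frac_ideal_def by auto
  obtain r where r: "r \<in> ringR" "r \<noteq> 0" "r * a \<in> ringR" using denom_exists by blast
  have sB: "R_submodule B" using B frac_sub by auto
  have "R_submodule (scale a B)" unfolding R_submodule_def scale_def
  proof (intro conjI ballI)
    show "0 \<in> (*) a ` B" using sB unfolding R_submodule_def by (metis image_eqI mult_zero_right)
    fix x y assume "x \<in> (*) a ` B" "y \<in> (*) a ` B"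
    then obtain u v where "u \<in> B" "v \<in> B" "x = a * u" "y = a * v" by auto
    moreover have "u + v \<in> B" using sB \<open>u \<in> B\<close> \<open>v \<in> B\<close> unfolding R_submodule_def by blast
    ultimately show "x + y \<in> (*) a ` B" by (metis distrib_left image_eqI)
  next
    fix t :: "'a fract" and x assume "t \<in> ringR" "x \<in> (*) a ` B"
    then obtain u where "u \<in> B" "x = a * u" by auto
    moreover have "t * u \<in> B" using sB \<open>u \<in> B\<close> \<open>t \<in> ringR\<close> unfolding R_submodule_def by blast
    ultimately show "t * x \<in> (*) a ` B" by (metis mult.left_commute image_eqI)
  qed
  moreover have "a * b \<in> scale a B" "a * b \<noteq> 0" using b a by (auto simp: scale_def)
  moreover have "\<forall>x\<in>scale a B. (r * d) * x \<in> ringR"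
  proof
    fix x assume "x \<in> scale a B"
    then obtain y where y: "y \<in> B" "x = a * y" by (auto simp: scale_def)
    have "(r * a) * (d * y) \<in> ringR" using r d y ringR_mult by blast
    thus "(r * d) * x \<in> ringR" using y by (simp add: algebra_simps)
  qed
  moreover have "r * d \<in> ringR" "r * d \<noteq> 0" using r d ringR_mult by auto
  moreover have "scale a B \<noteq> {0}" using \<open>a * b \<in> scale a B\<close> \<open>a * b \<noteq> 0\<close> by blast
  ultimately show ?thesis unfolding frac_ideal_def by blast
qed

lemma frac_pow: "frac_ideal I \<Longrightarrow> frac_ideal (ideal_pow I n)"
  by (induction n) (simp_all add: frac_ringR frac_mult)

lemma frac_inv_frac: assumes I: "nz_ideal I" shows "frac_ideal (frac_inv I)"
proof -
  have sI: "R_submodule I" "I \<subseteq> ringR" "I \<noteq> {0}" using I nz_ideal_def by auto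
  have "R_submodule (frac_inv I)" unfolding R_submodule_def frac_inv_def
  proof (intro conjI ballI)
    show "0 \<in> {x. \<forall>y\<in>I. x * y \<in> ringR}" by (simp add: ringR_0)
  next
    fix x y assume x: "x \<in> {x. \<forall>y\<in>I. x * y \<in> ringR}" and y: "y \<in> {x. \<forall>y\<in>I. x * y \<in> ringR}"
    show "x + y \<in> {x. \<forall>y\<in>I. x * y \<in> ringR}"
    proof (safe)
      fix z assume "z \<in> I"
      thus "(x + y) * z \<in> ringR" using x y by (simp add: distrib_right ringR_add)
    qed
  next
    fix t x :: "'a fract" assume t: "t \<in> ringR" and x: "x \<in> {x. \<forall>y\<in>I. x * y \<in> ringR}"
    show "t * x \<in> {x. \<forall>y\<in>I. x * y \<in> ringR}"
    proof (safe)
      fix z assume "z \<in> I"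
      thus "(t * x) * z \<in> ringR" using x t by (simp add: mult.assoc ringR_mult)
    qed
  qed
  moreover have "1 \<in> frac_inv I" using sI(2) by (auto simp: frac_inv_def)
  moreover obtain a where a: "a \<in> I" "a \<noteq> 0" using sI R_submodule_def by blast
  moreover have "\<forall>x\<in>frac_inv I. a * x \<in> ringR" using a by (auto simp: frac_inv_def mult.commute)
  ultimately show ?thesis unfolding frac_ideal_def using sI(2)
    by (metis (no_types, lifting) one_neq_zero singletonD subsetD)
qed

locale star = fixes st :: "'a::idom fract set \<Rightarrow> 'a fract set"
  assumes so: "star_operation st"
begin

lemma frac: "frac_ideal I \<Longrightarrow> frac_ideal (st I)"
  using so unfolding star_operation_def by metis
lemma scl: "a \<noteq> 0 \<Longrightarrow> frac_ideal I \<Longrightarrow> st (scale a I) = scale a (st I)"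
  using so unfolding star_operation_def by metis
lemma R: "st ringR = ringR"
  using so unfolding star_operation_def by metis
lemma ext: "frac_ideal I \<Longrightarrow> I \<subseteq> st I"
  using so unfolding star_operation_def by metis
lemma mono: "frac_ideal I \<Longrightarrow> frac_ideal J \<Longrightarrow> I \<subseteq> J \<Longrightarrow> st I \<subseteq> st J"
  using so unfolding star_operation_def by metis
lemma idem: "frac_ideal I \<Longrightarrow> st (st I) = st I"
  using so unfolding star_operation_def by metis

lemma st_right: assumes A: "frac_ideal A" and B: "frac_ideal B"
  shows "st (ideal_mult A (st B)) = st (ideal_mult A B)"
proof
  have fAB: "frac_ideal (ideal_mult A B)" using A B frac_mult by auto
  have fAsB: "frac_ideal (ideal_mult A (st B))" using A B frac_mult frac by auto
  have "ideal_mult A (st B) \<subseteq> st (ideal_mult A B)"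
  proof (rule im_least)
    show "R_submodule (st (ideal_mult A B))" using frac[OF fAB] frac_sub by auto
    fix a y assume a: "a \<in> A" and y: "y \<in> st B"
    show "a * y \<in> st (ideal_mult A B)"
    proof (cases "a = 0")
      case True thus ?thesis using frac[OF fAB] frac_sub R_submodule_def by auto
    next
      case False
      have "a * y \<in> scale a (st B)" using y by (auto simp: scale_def)
      also have "\<dots> = st (scale a B)" using scl[OF False B] by simp
      also have "\<dots> \<subseteq> st (ideal_mult A B)"
        by (rule mono[OF frac_scale[OF B False] fAB]) (auto simp: scale_def a intro: im_prod)
      finally show ?thesis .
    qed
  qed
  hence "st (ideal_mult A (st B)) \<subseteq> st (st (ideal_mult A B))"
    by (rule mono[OF fAsB frac[OF fAB]])
  thus "st (ideal_mult A (st B)) \<subseteq> st (ideal_mult A B)" using idem[OF fAB] by simp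
  show "st (ideal_mult A B) \<subseteq> st (ideal_mult A (st B))"
    by (rule mono[OF fAB fAsB]) (rule im_mono, auto simp: ext B)
qed

lemma st_left: "frac_ideal A \<Longrightarrow> frac_ideal B \<Longrightarrow> st (ideal_mult (st A) B) = st (ideal_mult A B)"
  using st_right im_comm by metis


lemma inv_step:
  assumes fI: "frac_ideal I" and fV: "frac_ideal V" and inv: "st (ideal_mult I V) = ringR"
    and fJ: "frac_ideal J"
  shows "st (ideal_mult J (ideal_pow I n)) = st (ideal_pow I (Suc n)) \<Longrightarrow> st J = st I"
proof (induction n)
  case 0
  have "J = ideal_mult J ringR" "I = ideal_mult I ringR"
    using im_ringR frac_sub fJ fI by metis+
  with 0 show ?case by simp
next
  case (Suc n)
  define P where "P = ideal_pow I n"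
  have fP: "frac_ideal P" unfolding P_def using frac_pow[OF fI] .
  have hyp: "st (ideal_mult J (ideal_mult I P)) = st (ideal_mult I (ideal_mult I P))"
    using Suc.prems P_def by simp
  have fJP: "frac_ideal (ideal_mult J P)" using fJ fP frac_mult by blast
  have fIP: "frac_ideal (ideal_mult I P)" using fI fP frac_mult by blast
  have fIV: "frac_ideal (ideal_mult I V)" using fI fV frac_mult by blast
  have "st (ideal_mult J P) = st (ideal_mult (ideal_mult J P) ringR)"
    using im_ringR[OF frac_sub[OF fJP]] by simp
  also have "\<dots> = st (ideal_mult (ideal_mult J P) (st (ideal_mult I V)))" using inv by simp
  also have "\<dots> = st (ideal_mult (ideal_mult J P) (ideal_mult I V))" using st_right[OF fJP fIV] .
  also have "ideal_mult (ideal_mult J P) (ideal_mult I V) = ideal_mult (ideal_mult J (ideal_mult I P)) V"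
    by (metis im_assoc im_comm)
  also have "st \<dots> = st (ideal_mult (st (ideal_mult J (ideal_mult I P))) V)"
    using st_left[OF frac_mult[OF fJ fIP] fV] by simp
  also have "\<dots> = st (ideal_mult (st (ideal_mult I (ideal_mult I P))) V)" using hyp by simp
  also have "\<dots> = st (ideal_mult (ideal_mult I (ideal_mult I P)) V)"
    using st_left[OF frac_mult[OF fI fIP] fV] .
  also have "ideal_mult (ideal_mult I (ideal_mult I P)) V = ideal_mult (ideal_mult I P) (ideal_mult I V)"
    by (metis im_assoc im_comm)
  also have "st \<dots> = st (ideal_mult (ideal_mult I P) (st (ideal_mult I V)))"
    using st_right[OF fIP fIV] by simp
  also have "\<dots> = st (ideal_mult I P)" using inv im_ringR[OF frac_sub[OF fIP]] by simp
  finally have "st (ideal_mult J (ideal_pow I n)) = st (ideal_pow I (Suc n))" using P_def by simp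
  thus ?case by (rule Suc.IH)
qed

lemma pow_idem:
  assumes fI: "frac_ideal I" and sq: "st (ideal_mult I I) = st I"
  shows "st (ideal_pow I (Suc n)) = st I"
proof (induction n)
  case 0
  show ?case using im_ringR[OF frac_sub[OF fI]] by simp
next
  case (Suc n)
  have "st (ideal_pow I (Suc (Suc n))) = st (ideal_mult I (ideal_pow I (Suc n)))" by simp
  also have "\<dots> = st (ideal_mult I (st (ideal_pow I (Suc n))))"
    using st_right[OF fI frac_pow[OF fI, of "Suc n"]] by simp
  also have "\<dots> = st (ideal_mult I I)" using Suc.IH st_right[OF fI fI] by simp
  finally show ?case using sq by simp
qed

lemma idem_case:
  assumes I: "nz_ideal I" and sq: "st (ideal_mult I I) = st I" and red: "star_reduction st J I"
  shows "st J = st I"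
proof -
  have fI: "frac_ideal I" using nz_frac I by blast
  have J: "nz_ideal J" "J \<subseteq> I" using red star_reduction_def by blast+
  have fJ: "frac_ideal J" using nz_frac J by blast
  obtain n where n: "st (ideal_mult J (ideal_pow I n)) = st (ideal_pow I (Suc n))"
    using red star_reduction_def by blast
  show ?thesis
  proof (cases n)
    case 0
    have "J = ideal_mult J ringR" "I = ideal_mult I ringR"
      using im_ringR frac_sub fJ fI by metis+
    with n 0 show "st J = st I" by simp
  next
    case (Suc m)
    have "st (ideal_mult J I) = st (ideal_mult J (st I))" using st_right[OF fJ fI] by simp
    also have "\<dots> = st (ideal_mult J (st (ideal_pow I n)))" using pow_idem[OF fI sq, of m] Suc by simp
    also have "\<dots> = st (ideal_mult J (ideal_pow I n))" using st_right[OF fJ frac_pow[OF fI]] .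
    also have "\<dots> = st I" using n pow_idem[OF fI sq, of n] by simp
    finally have eq: "st (ideal_mult J I) = st I" .
    have sJ: "R_submodule J" using J(1) nz_ideal_def by blast
    have "ideal_mult J I \<subseteq> J"
    proof (rule im_least[OF sJ])
      fix a b assume "a \<in> J" "b \<in> I"
      hence "b * a \<in> J" using sJ I unfolding R_submodule_def nz_ideal_def by blast
      thus "a * b \<in> J" by (simp add: mult.commute)
    qed
    hence "st (ideal_mult J I) \<subseteq> st J" using mono frac_mult[OF fJ fI] fJ by blast
    moreover have "st J \<subseteq> st I" using mono fJ fI J(2) by blast
    ultimately show "st J = st I" using eq by blast
  qed
qed
end

theorem lemma1p2:
  fixes st :: "'a::idom fract set \<Rightarrow> 'a fract set"
  assumes "star_operation st"
  shows "(\<forall>I. nz_ideal I \<and> st (ideal_mult I (frac_inv I)) = ringR \<longrightarrow> star_basic st I)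
       \<and> (\<forall>I. nz_ideal I \<and> st (ideal_mult I I) = st I \<longrightarrow> star_basic st I)"
proof -
  interpret star st using assms by unfold_locales
  show ?thesis
  proof (intro conjI allI impI)
    fix I assume h: "nz_ideal I \<and> st (ideal_mult I (frac_inv I)) = ringR"
    have fV: "frac_ideal (frac_inv I)" using frac_inv_frac h by blast
    show "star_basic st I" unfolding star_basic_def
    proof (intro allI impI)
      fix J assume red: "star_reduction st J I"
      then obtain n where n: "st (ideal_mult J (ideal_pow I n)) = st (ideal_pow I (Suc n))"
        and J: "nz_ideal J" unfolding star_reduction_def by blast
      show "st J = st I" using inv_step[OF nz_frac fV _ nz_frac[OF J] n] h by blast
    qed
  next
    fix I assume h: "nz_ideal I \<and> st (ideal_mult I I) = st I"
    thus "star_basic st I" unfolding star_basic_def using idem_case by blast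
  qed
qed

end
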